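(* Let $V$ be a finite-dimensional subspace of the space of differential $k$-forms on $T^n$, and let $W_d$ ($0\le d\le n$) be subspaces with $V_d=W_d\oplus V_{d+1}$. Then the geometric decomposition map $\mathcal D:V\to\bigoplus_{d=0}^n\bigoplus_{F\subseteq T^n,\ \dim F=d}\mathring V(F)$ is injective.
   Context: $T^n\subset\mathbb R^{n+1}$ is the standard simplex $\{\lambda_i\ge0,\ \sum\lambda_i=1\}$. For a face $F$, $V(F)=\mathrm{tr}_{T^n,F}(V)$ (pullback to $F$) and $\mathring V(F)$ is the subspace of $V(F)$ of forms whose trace on $\partial F$ vanishes. $V_d$ ($0\le d\le n+1$) is the subspace of $V$ of forms whose traces vanish on all $(d-1)$-dimensional faces of $T^n$ ($V_0=V$, $V_{n+1}=0$). $\mathcal D$ is the linear map defined on $W_d$ by $\alpha\mapsto\bigoplus_{\dim F=d}\mathrm{tr}_{T^n,F}\alpha$ and extended linearly to $V=W_0\oplus\dots\oplus W_n$ (the trace of $\alpha\in W_d$ on a $d$-face lies in $\mathring V(F)$). *)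

theory Defs
  imports "HOL-Analysis.Analysis"
begin

text \<open>Ambient space R^(n+1) is real^'m with CARD('m) = n+1; the simplex T^n lives in it.
 A (differential) k-form on T^n is represented as a function
 omega x vs  (x a point, vs j for j<k the argument vectors).\<close>

type_synonym 'm form = "real^'m \<Rightarrow> (nat \<Rightarrow> real^'m) \<Rightarrow> real"

definition simplex_face :: "'m::finite set \<Rightarrow> (real^'m) set" where
  "simplex_face S = {x. (\<forall>i. 0 \<le> x$i) \<and> (\<Sum>i\<in>UNIV. x$i) = 1 \<and> (\<forall>i. i \<notin> S \<longrightarrow> x$i = 0)}"

definition std_simplex :: "(real^'m::finite) set" where
  "std_simplex = simplex_face UNIV"

definition face_tangent :: "'m::finite set \<Rightarrow> (real^'m) set" where
  "face_tangent S = {v. (\<forall>i. i \<notin> S \<longrightarrow> v$i = 0) \<and> (\<Sum>i\<in>UNIV. v$i) = 0}"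

definition is_face :: "'m::finite set \<Rightarrow> bool" where
  "is_face S \<longleftrightarrow> S \<noteq> {}"

definition face_dim :: "'m::finite set \<Rightarrow> nat" where
  "face_dim S = card S - 1"

text \<open>k-forms on T^n: at each point of T^n an alternating k-linear form on the tangent
 space of T^n; (extensionally) zero off T^n / off tangent arguments, and depending only on
 the first k argument vectors.\<close>
definition is_kform :: "nat \<Rightarrow> 'm::finite form \<Rightarrow> bool" where
  "is_kform k \<omega> \<longleftrightarrow>
     (\<forall>x vs. (x \<notin> std_simplex \<or> (\<exists>j<k. vs j \<notin> face_tangent UNIV)) \<longrightarrow> \<omega> x vs = 0) \<and>
     (\<forall>x vs vs'. (\<forall>j<k. vs j = vs' j) \<longrightarrow> \<omega> x vs = \<omega> x vs') \<and>
     (\<forall>x\<in>std_simplex. \<forall>vs. \<forall>j<k. \<forall>a b u w.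
        (\<forall>i<k. vs i \<in> face_tangent UNIV) \<and> u \<in> face_tangent UNIV \<and> w \<in> face_tangent UNIV \<longrightarrow>
        \<omega> x (vs(j := a *\<^sub>R u + b *\<^sub>R w)) = a * \<omega> x (vs(j := u)) + b * \<omega> x (vs(j := w))) \<and>
     (\<forall>x vs i j. i < k \<and> j < k \<and> i \<noteq> j \<and> vs i = vs j \<longrightarrow> \<omega> x vs = 0)"

definition zero_form :: "'m::finite form" where
  "zero_form = (\<lambda>x vs. 0)"

definition add_form :: "'m::finite form \<Rightarrow> 'm form \<Rightarrow> 'm form" where
  "add_form f g = (\<lambda>x vs. f x vs + g x vs)"

definition scale_form :: "real \<Rightarrow> 'm::finite form \<Rightarrow> 'm form" where
  "scale_form c f = (\<lambda>x vs. c * f x vs)"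

definition form_subspace :: "nat \<Rightarrow> 'm::finite form set \<Rightarrow> bool" where
  "form_subspace k V \<longleftrightarrow> (\<forall>\<omega>\<in>V. is_kform k \<omega>) \<and> zero_form \<in> V \<and>
     (\<forall>f\<in>V. \<forall>g\<in>V. add_form f g \<in> V) \<and> (\<forall>c. \<forall>f\<in>V. scale_form c f \<in> V)"

definition form_span :: "'m::finite form set \<Rightarrow> 'm form set" where
  "form_span B = {\<omega>. \<exists>c. \<omega> = (\<lambda>x vs. \<Sum>b\<in>B. c b * b x vs)}"

definition fin_dim_form_subspace :: "nat \<Rightarrow> 'm::finite form set \<Rightarrow> bool" where
  "fin_dim_form_subspace k V \<longleftrightarrow> form_subspace k V \<and> (\<exists>B. finite B \<and> B \<subseteq> V \<and> V = form_span B)"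

text \<open>Trace (pullback) of a k-form to the face F_S: restriction to points of F_S and to
 tangent vectors of F_S (extended by zero).\<close>
definition trace_form :: "nat \<Rightarrow> 'm::finite set \<Rightarrow> 'm form \<Rightarrow> 'm form" where
  "trace_form k S \<omega> = (\<lambda>x vs. if x \<in> simplex_face S \<and> (\<forall>j<k. vs j \<in> face_tangent S) then \<omega> x vs else 0)"

definition Vsub :: "nat \<Rightarrow> 'm::finite form set \<Rightarrow> nat \<Rightarrow> 'm form set" where
  "Vsub k V d = {\<omega>\<in>V. \<forall>S. is_face S \<and> face_dim S + 1 = d \<longrightarrow> trace_form k S \<omega> = zero_form}"

definition direct_sum_eq :: "nat \<Rightarrow> 'm::finite form set \<Rightarrow> 'm form set \<Rightarrow> 'm form set \<Rightarrow> bool" where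
  "direct_sum_eq k C A B \<longleftrightarrow> form_subspace k A \<and> form_subspace k B \<and> A \<inter> B = {zero_form} \<and>
     C = {add_form a b | a b. a \<in> A \<and> b \<in> B}"

text \<open>Geometric decomposition map: write alpha = w_0 + ... + w_n with w_d in W_d
 (unique since V = W_0 (+) ... (+) W_n) and send alpha to the family of traces
 tr_F w_(dim F) indexed by the faces F (the zero family component is used for non-faces).\<close>
definition W_components :: "nat \<Rightarrow> (nat \<Rightarrow> 'm::finite form set) \<Rightarrow> 'm form \<Rightarrow> (nat \<Rightarrow> 'm form)" where
  "W_components n W \<alpha> = (THE w. (\<forall>d\<le>n. w d \<in> W d) \<and> (\<forall>d>n. w d = zero_form) \<and>
                              \<alpha> = (\<lambda>x vs. \<Sum>d\<le>n. w d x vs))"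

definition geom_decomp :: "nat \<Rightarrow> nat \<Rightarrow> (nat \<Rightarrow> 'm::finite form set) \<Rightarrow> 'm form \<Rightarrow> ('m set \<Rightarrow> 'm form)" where
  "geom_decomp k n W \<alpha> = (\<lambda>S. if is_face S then trace_form k S (W_components n W \<alpha> (face_dim S)) else zero_form)"

end

theory Submission
  imports Defs
begin

lemma fs_sum:
  assumes A: "form_subspace k A" and "finite I" and "\<And>i. i \<in> I \<Longrightarrow> f i \<in> A"
  shows "(\<lambda>x vs. \<Sum>i\<in>I. f i x vs) \<in> A"
  using assms(2,3)
proof (induction I rule: finite_induct)
  case empty
  have "(\<lambda>x vs. \<Sum>i\<in>{}. f i x vs) = zero_form" by (simp add: zero_form_def)
  then show ?case using A by (simp add: form_subspace_def)
next
  case (insert a F)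
  have "(\<lambda>x vs. \<Sum>i\<in>insert a F. f i x vs) = add_form (f a) (\<lambda>x vs. \<Sum>i\<in>F. f i x vs)"
    using insert.hyps by (simp add: add_form_def)
  moreover have "f a \<in> A" using insert.prems by simp
  moreover have "(\<lambda>x vs. \<Sum>i\<in>F. f i x vs) \<in> A" using insert by simp
  ultimately show ?case using A by (simp add: form_subspace_def)
qed

lemma fs_diff:
  assumes A: "form_subspace k A" and "f \<in> A" "g \<in> A"
  shows "(\<lambda>x vs. f x vs - g x vs) \<in> A"
proof -
  have "add_form f (scale_form (-1) g) \<in> A" using assms by (simp add: form_subspace_def)
  moreover have "add_form f (scale_form (-1) g) = (\<lambda>x vs. f x vs - g x vs)"
    by (simp add: add_form_def scale_form_def)
  ultimately show ?thesis by simp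
qed

lemma fs_neg:
  assumes A: "form_subspace k A" and "f \<in> A"
  shows "(\<lambda>x vs. - f x vs) \<in> A"
proof -
  have "scale_form (-1) f \<in> A" using assms by (simp add: form_subspace_def)
  moreover have "scale_form (-1) f = (\<lambda>x vs. - f x vs)"
    by (simp add: scale_form_def)
  ultimately show ?thesis by simp
qed

theorem proposition3p10:
  fixes V :: "'m::finite form set" and W :: "nat \<Rightarrow> 'm form set" and k n :: nat
  assumes "CARD('m) = n + 1"
    and "fin_dim_form_subspace k V"
    and "\<And>d. d \<le> n \<Longrightarrow> direct_sum_eq k (Vsub k V d) (W d) (Vsub k V (d + 1))"
  shows "inj_on (geom_decomp k n W) V"
proof -
  let ?Vs = "Vsub k V"
  have ds: "form_subspace k (W d) \<and> form_subspace k (?Vs (Suc d)) \<and> W d \<inter> ?Vs (Suc d) = {zero_form}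
     \<and> ?Vs d = {add_form a b | a b. a \<in> W d \<and> b \<in> ?Vs (Suc d)}" if "d \<le> n" for d
    using assms(3)[OF that] unfolding direct_sum_eq_def by simp
  have VsV: "?Vs d \<subseteq> V" for d by (auto simp: Vsub_def)
  have Vs0: "?Vs 0 = V" by (auto simp: Vsub_def)
  have kf: "is_kform k \<omega>" if "\<omega> \<in> V" for \<omega>
    using assms(2) that by (auto simp: fin_dim_form_subspace_def form_subspace_def)
  have add0: "add_form a zero_form = a" for a :: "'m form" by (simp add: add_form_def zero_form_def)
  have Oadd: "add_form zero_form a = a" for a :: "'m form" by (simp add: add_form_def zero_form_def)
  have WV: "W d \<subseteq> ?Vs d" if "d \<le> n" for d
  proof
    fix a assume a: "a \<in> W d"
    have "zero_form \<in> ?Vs (Suc d)" using ds[OF that] by (simp add: form_subspace_def)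
    then have "add_form a zero_form \<in> ?Vs d" using ds[OF that] a by blast
    then show "a \<in> ?Vs d" by (simp add: add0)
  qed
  have Vmono1: "?Vs (Suc d) \<subseteq> ?Vs d" if "d \<le> n" for d
  proof
    fix a assume a: "a \<in> ?Vs (Suc d)"
    have "zero_form \<in> W d" using ds[OF that] by (simp add: form_subspace_def)
    then have "add_form zero_form a \<in> ?Vs d" using ds[OF that] a by blast
    then show "a \<in> ?Vs d" by (simp add: Oadd)
  qed
  have Vmono: "e \<le> Suc n \<longrightarrow> ?Vs e \<subseteq> ?Vs d" if "d \<le> e" for d e
    using that
  proof (induction e rule: dec_induct)
    case base then show ?case by simp
  next
    case (step m)
    then show ?case using Vmono1[of m] by auto
  qed
  have Vtop: "\<alpha> = zero_form" if "\<alpha> \<in> ?Vs (Suc n)" for \<alpha>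
  proof -
    have aV: "\<alpha> \<in> V" using that VsV by auto
    have "is_face (UNIV :: 'm set)" by (simp add: is_face_def)
    moreover have "face_dim (UNIV :: 'm set) + 1 = Suc n" using assms(1) by (simp add: face_dim_def)
    ultimately have tr: "trace_form k UNIV \<alpha> = zero_form" using that by (auto simp: Vsub_def)
    show ?thesis
    proof (rule ext, rule ext)
      fix x vs
      show "\<alpha> x vs = zero_form x vs"
      proof (cases "x \<in> simplex_face UNIV \<and> (\<forall>j<k. vs j \<in> face_tangent UNIV)")
        case True
        then have "\<alpha> x vs = trace_form k UNIV \<alpha> x vs" by (simp add: trace_form_def)
        then show ?thesis using tr by simp
      next
        case False
        then show ?thesis using kf[OF aV] by (auto simp: is_kform_def std_simplex_def zero_form_def)
      qed
    qed
  qed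
  define P where "P \<alpha> w \<longleftrightarrow> (\<forall>d\<le>n. w d \<in> W d) \<and> (\<forall>d>n. w d = zero_form) \<and> \<alpha> = (\<lambda>x vs. \<Sum>d\<le>n. w d x vs)"
    for \<alpha> :: "'m form" and w
  have uniq: "w = w'" if Pw: "P \<alpha> w" and Pw': "P \<alpha> w'" for \<alpha> w w'
  proof -
    define u where "u d = (\<lambda>x vs. w d x vs - w' d x vs)" for d
    have uW: "u d \<in> W d" if "d \<le> n" for d
      using fs_diff[of k "W d" "w d" "w' d"] ds[OF that] Pw Pw' that by (simp add: P_def u_def)
    have usum: "(\<Sum>d\<le>n. u d x vs) = 0" for x vs
    proof -
      have e1: "\<alpha> = (\<lambda>x vs. \<Sum>d\<le>n. w d x vs)" using Pw unfolding P_def by (elim conjE) assumption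
      have e2: "\<alpha> = (\<lambda>x vs. \<Sum>d\<le>n. w' d x vs)" using Pw' unfolding P_def by (elim conjE) assumption
      have h1: "\<alpha> x vs = (\<Sum>d\<le>n. w d x vs)" by (subst e1) (rule refl)
      have h2: "\<alpha> x vs = (\<Sum>d\<le>n. w' d x vs)" by (subst e2) (rule refl)
      have "(\<Sum>d\<le>n. w d x vs) = (\<Sum>d\<le>n. w' d x vs)" using h1 h2 by simp
      then show ?thesis by (simp add: u_def sum_subtractf)
    qed
    have uz: "d \<le> n \<longrightarrow> u d = zero_form" for d
    proof (induction d rule: less_induct)
      case (less d)
      show ?case
      proof
        assume dn: "d \<le> n"
        have ud: "u d x vs = - (\<Sum>e\<in>{Suc d..n}. u e x vs)" for x vs
        proof -
          have "(\<Sum>e\<le>n. u e x vs) = (\<Sum>e\<in>{d..n}. u e x vs)"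
          proof (rule sum.mono_neutral_right)
            show "\<forall>i\<in>{..n} - {d..n}. u i x vs = 0"
              using less dn by (auto simp: zero_form_def)
          qed auto
          also have "{d..n} = insert d {Suc d..n}" using dn by auto
          finally show ?thesis using usum[of x vs] by simp
        qed
        have "(\<lambda>x vs. \<Sum>e\<in>{Suc d..n}. u e x vs) \<in> ?Vs (Suc d)"
        proof (rule fs_sum)
          show "form_subspace k (?Vs (Suc d))" using ds[OF dn] by simp
          fix e assume e: "e \<in> {Suc d..n}"
          then have "u e \<in> ?Vs e" using uW WV by auto
          moreover have "?Vs e \<subseteq> ?Vs (Suc d)" using Vmono[of "Suc d" e] e by auto
          ultimately show "u e \<in> ?Vs (Suc d)" by auto
        qed simp
        then have "(\<lambda>x vs. - (\<Sum>e\<in>{Suc d..n}. u e x vs)) \<in> ?Vs (Suc d)"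
          using fs_neg ds[OF dn] by blast
        moreover have "(\<lambda>x vs. - (\<Sum>e\<in>{Suc d..n}. u e x vs)) = u d"
          using ud by (intro ext) simp
        ultimately have "u d \<in> ?Vs (Suc d)" by simp
        then have "u d \<in> W d \<inter> ?Vs (Suc d)" using uW dn by simp
        then show "u d = zero_form" using ds[OF dn] by simp
      qed
    qed
    show ?thesis
    proof
      fix d
      show "w d = w' d"
      proof (cases "d \<le> n")
        case True
        then have "u d = zero_form" using uz by simp
        then show ?thesis unfolding u_def zero_form_def
          by (intro ext) (metis eq_iff_diff_eq_0)
      next
        case False then show ?thesis using Pw Pw' by (simp add: P_def)
      qed
    qed
  qed
  have exd: "\<forall>\<alpha>\<in>?Vs d. \<exists>w. (\<forall>e<d. w e = zero_form) \<and> P \<alpha> w" if "d \<le> Suc n" for d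
    using that
  proof (induction d rule: inc_induct)
    case base
    show ?case
    proof
      fix \<alpha> assume "\<alpha> \<in> ?Vs (Suc n)"
      then have a0: "\<alpha> = zero_form" using Vtop by simp
      have "P \<alpha> (\<lambda>_. zero_form)"
        unfolding P_def
      proof (intro conjI allI impI)
        fix d assume "d \<le> n"
        then show "zero_form \<in> W d" using ds[of d] by (simp add: form_subspace_def)
      next
        show "\<alpha> = (\<lambda>x vs. \<Sum>d\<le>n. zero_form x vs)" using a0 by (simp add: zero_form_def)
      qed simp
      then show "\<exists>w. (\<forall>e<Suc n. w e = zero_form) \<and> P \<alpha> w"
        by (intro exI[where x="\<lambda>_. zero_form"] conjI) simp_all
    qed
  next
    case (step d)
    then have dn: "d \<le> n" by simp
    show ?case
    proof
      fix \<alpha> assume "\<alpha> \<in> ?Vs d"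
      then obtain a b where ab: "\<alpha> = add_form a b" "a \<in> W d" "b \<in> ?Vs (Suc d)"
        using ds[OF dn] by blast
      have "\<exists>w. (\<forall>e<Suc d. w e = zero_form) \<and> P b w" using step.IH ab(3) by (rule bspec)
      then obtain w where w: "\<forall>e<Suc d. w e = zero_form" "P b w" by (elim exE conjE)
      define w2 where "w2 = w(d := a)"
      have "\<forall>e<d. w2 e = zero_form" using w by (simp add: w2_def)
      moreover have "P \<alpha> w2"
        unfolding P_def
      proof (intro conjI allI impI)
        fix e assume "e \<le> n" then show "w2 e \<in> W e" using w ab by (simp add: w2_def P_def)
      next
        fix e assume "e > n" then show "w2 e = zero_form" using w dn by (simp add: w2_def P_def)
      next
        show "\<alpha> = (\<lambda>x vs. \<Sum>e\<le>n. w2 e x vs)"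
        proof (intro ext)
          fix x vs
          have "(\<Sum>e\<le>n. w2 e x vs) = (\<Sum>e\<le>n. w e x vs + (if e = d then a x vs else 0))"
            using w(1) by (intro sum.cong) (auto simp: w2_def zero_form_def)
          also have "\<dots> = (\<Sum>e\<le>n. w e x vs) + a x vs"
            using dn by (simp add: sum.distrib)
          also have "(\<Sum>e\<le>n. w e x vs) = b x vs" using w(2) by (simp add: P_def)
          finally show "\<alpha> x vs = (\<Sum>e\<le>n. w2 e x vs)" using ab(1) by (simp add: add_form_def)
        qed
      qed
      ultimately show "\<exists>w. (\<forall>e<d. w e = zero_form) \<and> P \<alpha> w" by (intro exI[where x=w2] conjI)
    qed
  qed
  have comp: "P \<alpha> (W_components n W \<alpha>)" if "\<alpha> \<in> V" for \<alpha>
  proof -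
    have "\<exists>w. P \<alpha> w" using exd[of 0] Vs0 that by auto
    then have "\<exists>!w. P \<alpha> w" using uniq by blast
    then have "P \<alpha> (THE w. P \<alpha> w)" by (rule theI')
    moreover have "W_components n W \<alpha> = (THE w. P \<alpha> w)"
      by (simp add: W_components_def P_def)
    ultimately show ?thesis by simp
  qed
  show ?thesis
  proof (rule inj_onI)
    fix \<alpha> \<beta> assume aV: "\<alpha> \<in> V" and bV: "\<beta> \<in> V" and eq: "geom_decomp k n W \<alpha> = geom_decomp k n W \<beta>"
    define w where "w = W_components n W \<alpha>"
    define w' where "w' = W_components n W \<beta>"
    have Pw: "P \<alpha> w" using comp aV by (simp add: w_def)
    have Pw': "P \<beta> w'" using comp bV by (simp add: w'_def)
    have weq: "w d = w' d" if dn: "d \<le> n" for d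
    proof -
      define u where "u = (\<lambda>x vs. w d x vs - w' d x vs)"
      have uW: "u \<in> W d"
        using fs_diff[of k "W d" "w d" "w' d"] ds[OF dn] Pw Pw' dn by (simp add: P_def u_def)
      have uV: "u \<in> V" using uW WV[OF dn] VsV by blast
      have "trace_form k S u = zero_form" if S: "is_face S" "face_dim S + 1 = Suc d" for S
      proof -
        have "geom_decomp k n W \<alpha> S = geom_decomp k n W \<beta> S" using eq by simp
        then have te: "trace_form k S (w d) = trace_form k S (w' d)"
          using S by (simp add: geom_decomp_def w_def w'_def)
        show ?thesis
        proof (intro ext)
          fix x vs
          have "trace_form k S (w d) x vs = trace_form k S (w' d) x vs" using te by simp
          then show "trace_form k S u x vs = zero_form x vs"
            by (auto simp: trace_form_def u_def zero_form_def split: if_splits)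
        qed
      qed
      then have "u \<in> ?Vs (Suc d)" using uV by (auto simp: Vsub_def)
      then have "u = zero_form" using uW ds[OF dn] by blast
      then show ?thesis unfolding u_def zero_form_def
        by (intro ext) (metis eq_iff_diff_eq_0)
    qed
    have "\<alpha> = (\<lambda>x vs. \<Sum>d\<le>n. w d x vs)" using Pw by (simp add: P_def)
    also have "\<dots> = (\<lambda>x vs. \<Sum>d\<le>n. w' d x vs)" using weq by simp
    also have "\<dots> = \<beta>" using Pw' by (simp add: P_def)
    finally show "\<alpha> = \<beta>" .
  qed
qed

end
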